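(* The set $\mathbf{Sch}$ of all Schröder partitions, ordered by $\lambda\le\mu$ iff $\lambda_i\le\mu_i$ for all $i$, is a distributive lattice.
   Context: A Schröder partition is an integer partition in which every odd part has multiplicity at most $1$. In the order, parts beyond the length of a partition are taken to be $0$ (equivalently, $\lambda=(\lambda_1,\dots,\lambda_h)\le\mu=(\mu_1,\dots,\mu_k)$ iff $h\le k$ and $\lambda_i\le\mu_i$ for $i\le h$); this is containment of the corresponding shapes drawn with common top-left corner. *)

theory Defs
  imports "HOL-Algebra.Lattice"
begin

definition is_partition :: "nat list \<Rightarrow> bool" where
  "is_partition xs \<longleftrightarrow> sorted_wrt (\<ge>) xs \<and> (\<forall>x\<in>set xs. 0 < x)"

definition schroeder_partition :: "nat list \<Rightarrow> bool" where
  "schroeder_partition xs \<longleftrightarrow> is_partition xs \<and> (\<forall>x\<in>set xs. odd x \<longrightarrow> count_list xs x \<le> 1)"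

definition Sch :: "nat list set" where
  "Sch = {xs. schroeder_partition xs}"

definition part_le :: "nat list \<Rightarrow> nat list \<Rightarrow> bool" where
  "part_le l m \<longleftrightarrow> length l \<le> length m \<and> (\<forall>i < length l. l ! i \<le> m ! i)"

definition Sch_poset :: "nat list gorder" where
  "Sch_poset = \<lparr>carrier = Sch, eq = (=), le = part_le\<rparr>"

definition distributive_lattice :: "('a, 'b) gorder_scheme \<Rightarrow> bool" where
  "distributive_lattice L \<longleftrightarrow> lattice L \<and>
     (\<forall>x\<in>carrier L. \<forall>y\<in>carrier L. \<forall>z\<in>carrier L.
        x \<sqinter>\<^bsub>L\<^esub> (y \<squnion>\<^bsub>L\<^esub> z) = (x \<sqinter>\<^bsub>L\<^esub> y) \<squnion>\<^bsub>L\<^esub> (x \<sqinter>\<^bsub>L\<^esub> z))"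

end

theory Submission
  imports Defs
begin

definition gv :: "nat list \<Rightarrow> nat \<Rightarrow> nat" where
  "gv l i = (if i < length l then l ! i else 0)"

definition Jn :: "nat list \<Rightarrow> nat list \<Rightarrow> nat list" where
  "Jn l m = map (\<lambda>i. max (gv l i) (gv m i)) [0..<max (length l) (length m)]"

definition Mt :: "nat list \<Rightarrow> nat list \<Rightarrow> nat list" where
  "Mt l m = map (\<lambda>i. min (gv l i) (gv m i)) [0..<min (length l) (length m)]"

lemma gv_map: "gv (map f [0..<n]) i = (if i < n then f i else 0)"
  by (simp add: gv_def)

lemma gv_Jn: "gv (Jn l m) i = max (gv l i) (gv m i)"
  by (auto simp: Jn_def gv_map) (auto simp: gv_def)

lemma gv_Mt: "gv (Mt l m) i = min (gv l i) (gv m i)"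
  by (auto simp: Mt_def gv_map) (auto simp: gv_def)

lemma len_Jn: "length (Jn l m) = max (length l) (length m)" by (simp add: Jn_def)
lemma len_Mt: "length (Mt l m) = min (length l) (length m)" by (simp add: Mt_def)

lemma part_le_antisym: "part_le l m \<Longrightarrow> part_le m l \<Longrightarrow> l = m"
  unfolding part_le_def by (auto intro!: nth_equalityI simp: le_antisym)

lemma part_le_gv:
  assumes "\<forall>i<length l. 0 < l ! i"
  shows "part_le l m \<longleftrightarrow> (\<forall>i. gv l i \<le> gv m i)"
proof
  assume "part_le l m" thus "\<forall>i. gv l i \<le> gv m i" by (auto simp: part_le_def gv_def)
next
  assume h: "\<forall>i. gv l i \<le> gv m i"
  have "length l \<le> length m"
  proof (rule ccontr)
    assume "\<not> ?thesis"
    hence "length m < length l" by simp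
    hence "gv l (length m) = l ! length m" "gv m (length m) = 0" by (auto simp: gv_def)
    moreover have "0 < l ! length m" using assms \<open>length m < length l\<close> by blast
    ultimately show False using h by (metis not_le)
  qed
  moreover have "l ! i \<le> m ! i" if "i < length l" for i
  proof -
    have "gv l i \<le> gv m i" using h by blast
    moreover have "i < length m" using that \<open>length l \<le> length m\<close> by simp
    ultimately show ?thesis using that by (simp add: gv_def)
  qed
  ultimately show "part_le l m" by (simp add: part_le_def)
qed

definition good :: "nat list \<Rightarrow> bool" where
  "good l \<longleftrightarrow> (\<forall>i j. i \<le> j \<longrightarrow> gv l j \<le> gv l i) \<and> (\<forall>i<length l. 0 < l ! i)
     \<and> (\<forall>i. odd (gv l i) \<longrightarrow> gv l (Suc i) < gv l i)"

lemma count_le1: "count_list xs x \<le> 1 \<longleftrightarrow>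
   (\<forall>i j. i < length xs \<longrightarrow> j < length xs \<longrightarrow> xs!i = x \<longrightarrow> xs!j = x \<longrightarrow> i = j)"
proof -
  have "count_list xs x = card {i. i < length xs \<and> xs ! i = x}"
    by (simp add: count_list_eq_length_filter length_filter_conv_card eq_commute)
  moreover have "finite {i. i < length xs \<and> xs ! i = x}" by simp
  ultimately show ?thesis by (auto simp: card_le_Suc0_iff_eq)
qed

lemma sch_good: "schroeder_partition l \<longleftrightarrow> good l"
proof
  assume s: "schroeder_partition l"
  hence sw: "sorted_wrt (\<ge>) l" and pos: "\<forall>x\<in>set l. 0 < x"
    and od: "\<forall>x\<in>set l. odd x \<longrightarrow> count_list l x \<le> 1"
    by (auto simp: schroeder_partition_def is_partition_def)
  have mono: "\<And>i j. i \<le> j \<Longrightarrow> gv l j \<le> gv l i"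
  proof -
    fix i j :: nat assume "i \<le> j"
    thus "gv l j \<le> gv l i" using sw
      by (cases "i = j") (auto simp: gv_def sorted_wrt_iff_nth_less)
  qed
  have p2: "\<forall>i<length l. 0 < l ! i" using pos by auto
  have o3: "\<And>i. odd (gv l i) \<Longrightarrow> gv l (Suc i) < gv l i"
  proof -
    fix i assume oi: "odd (gv l i)"
    hence il: "i < length l" by (auto simp: gv_def split: if_splits)
    show "gv l (Suc i) < gv l i"
    proof (cases "Suc i < length l")
      case True
      have le: "gv l (Suc i) \<le> gv l i" using mono by simp
      have "gv l (Suc i) \<noteq> gv l i"
      proof
        assume eq: "gv l (Suc i) = gv l i"
        have "l ! i \<in> set l" using il by simp
        moreover have "odd (l ! i)" using oi il by (simp add: gv_def)
        ultimately have "count_list l (l ! i) \<le> 1" using od by blast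
        hence "\<forall>a b. a < length l \<longrightarrow> b < length l \<longrightarrow> l!a = l!i \<longrightarrow> l!b = l!i \<longrightarrow> a = b"
          by (simp only: count_le1)
        moreover have "l ! Suc i = l ! i" using eq True il by (simp add: gv_def)
        ultimately show False using True il by (metis n_not_Suc_n)
      qed
      thus ?thesis using le by simp
    next
      case False thus ?thesis using il p2 by (simp add: gv_def)
    qed
  qed
  show "good l" unfolding good_def using mono p2 o3 by blast
next
  assume g: "good l"
  hence mono: "\<And>i j. i \<le> j \<Longrightarrow> gv l j \<le> gv l i" and p2: "\<forall>i<length l. 0 < l ! i"
    and o3: "\<And>i. odd (gv l i) \<Longrightarrow> gv l (Suc i) < gv l i" unfolding good_def by blast+
  have sw: "sorted_wrt (\<ge>) l"
    unfolding sorted_wrt_iff_nth_less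
  proof (intro allI impI)
    fix i j assume "i < j" "j < length l"
    thus "l ! j \<le> l ! i" using mono[of i j] by (simp add: gv_def)
  qed
  have pos: "\<forall>x\<in>set l. 0 < x" using p2 by (auto simp: in_set_conv_nth)
  have cnt: "\<forall>x\<in>set l. odd x \<longrightarrow> count_list l x \<le> 1"
  proof (intro ballI impI)
    fix x assume "x \<in> set l" "odd x"
    show "count_list l x \<le> 1" unfolding count_le1
    proof (intro allI impI, rule ccontr)
      fix i j assume ij: "i < length l" "j < length l" "l ! i = x" "l ! j = x" "i \<noteq> j"
      have key: "\<And>a b. a < b \<Longrightarrow> b < length l \<Longrightarrow> l!a = x \<Longrightarrow> l!b = x \<Longrightarrow> False"
      proof -
        fix a b assume ab: "a < b" "b < length l" "l!a = x" "l!b = x"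
        have "gv l a = x" "gv l b = x" using ab by (auto simp: gv_def)
        hence "gv l (Suc a) < x" using o3 \<open>odd x\<close> by metis
        moreover have "gv l b \<le> gv l (Suc a)" using mono ab by simp
        ultimately show False using \<open>gv l b = x\<close> by simp
      qed
      show False using ij key[of i j] key[of j i] by (cases "i < j") auto
    qed
  qed
  show "schroeder_partition l" using sw pos cnt
    by (simp add: schroeder_partition_def is_partition_def)
qed

lemma good_gvI:
  assumes "\<And>i j. i \<le> j \<Longrightarrow> gv l j \<le> gv l i" "\<forall>i<length l. 0 < l ! i"
    "\<And>i. odd (gv l i) \<Longrightarrow> gv l (Suc i) < gv l i"
  shows "good l" using assms unfolding good_def by blast

lemma good_pos: "good l \<Longrightarrow> i < length l \<Longrightarrow> 0 < gv l i"
  by (simp add: good_def gv_def)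

lemma aux_min:
  fixes a1 a2 b1 b2 :: nat
  assumes "a2 \<le> a1" "b2 \<le> b1" "odd a1 \<Longrightarrow> a2 < a1" "odd b1 \<Longrightarrow> b2 < b1" "odd (min a1 b1)"
  shows "min a2 b2 < min a1 b1"
proof (cases "a1 \<le> b1")
  case True
  hence "min a1 b1 = a1" by simp
  thus ?thesis using assms by (metis min.strict_coboundedI1)
next
  case False
  hence "min a1 b1 = b1" by simp
  thus ?thesis using assms by (metis min.strict_coboundedI2)
qed

lemma aux_max:
  fixes a1 a2 b1 b2 :: nat
  assumes "a2 \<le> a1" "b2 \<le> b1" "odd a1 \<Longrightarrow> a2 < a1" "odd b1 \<Longrightarrow> b2 < b1" "odd (max a1 b1)"
  shows "max a2 b2 < max a1 b1"
proof (cases "b1 \<le> a1")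
  case True
  hence m: "max a1 b1 = a1" by simp
  hence "a2 < a1" using assms by simp
  moreover have "b2 < a1"
  proof (cases "b1 = a1")
    case True thus ?thesis using assms m by simp
  next
    case False thus ?thesis using assms \<open>b1 \<le> a1\<close> by simp
  qed
  ultimately show ?thesis using m by simp
next
  case False
  hence m: "max a1 b1 = b1" by simp
  hence "b2 < b1" using assms by simp
  moreover have "a2 < b1" using assms False by simp
  ultimately show ?thesis using m by simp
qed

lemma good_Jn:
  assumes "good l" "good m" shows "good (Jn l m)"
proof (rule good_gvI)
  fix i j :: nat assume "i \<le> j"
  thus "gv (Jn l m) j \<le> gv (Jn l m) i" using assms
    unfolding gv_Jn good_def by (meson max.mono)
next
  show "\<forall>i<length (Jn l m). 0 < Jn l m ! i"
  proof (intro allI impI)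
    fix i assume i: "i < length (Jn l m)"
    have "0 < gv (Jn l m) i"
      using i good_pos[OF assms(1), of i] good_pos[OF assms(2), of i]
      by (auto simp: gv_Jn len_Jn less_max_iff_disj)
    thus "0 < Jn l m ! i" using i by (simp add: gv_def)
  qed
next
  fix i assume o: "odd (gv (Jn l m) i)"
  have a: "gv l (Suc i) \<le> gv l i" "gv m (Suc i) \<le> gv m i" using assms by (auto simp: good_def)
  have b: "odd (gv l i) \<Longrightarrow> gv l (Suc i) < gv l i" "odd (gv m i) \<Longrightarrow> gv m (Suc i) < gv m i"
    using assms by (auto simp: good_def)
  show "gv (Jn l m) (Suc i) < gv (Jn l m) i"
    using aux_max[OF a b o[unfolded gv_Jn]] unfolding gv_Jn .
qed

lemma good_Mt:
  assumes "good l" "good m" shows "good (Mt l m)"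
proof (rule good_gvI)
  fix i j :: nat assume "i \<le> j"
  thus "gv (Mt l m) j \<le> gv (Mt l m) i" using assms
    unfolding gv_Mt good_def by (meson min.mono)
next
  show "\<forall>i<length (Mt l m). 0 < Mt l m ! i"
  proof (intro allI impI)
    fix i assume i: "i < length (Mt l m)"
    have "0 < gv (Mt l m) i"
      using i good_pos[OF assms(1), of i] good_pos[OF assms(2), of i]
      by (auto simp: gv_Mt len_Mt)
    thus "0 < Mt l m ! i" using i by (simp add: gv_def)
  qed
next
  fix i assume o: "odd (gv (Mt l m) i)"
  have a: "gv l (Suc i) \<le> gv l i" "gv m (Suc i) \<le> gv m i" using assms by (auto simp: good_def)
  have b: "odd (gv l i) \<Longrightarrow> gv l (Suc i) < gv l i" "odd (gv m i) \<Longrightarrow> gv m (Suc i) < gv m i"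
    using assms by (auto simp: good_def)
  show "gv (Mt l m) (Suc i) < gv (Mt l m) i"
    using aux_min[OF a b o[unfolded gv_Mt]] unfolding gv_Mt .
qed

lemma Sch_good: "l \<in> Sch \<longleftrightarrow> good l" by (simp add: Sch_def sch_good)

lemma le_iff: "good l \<Longrightarrow> part_le l m \<longleftrightarrow> (\<forall>i. gv l i \<le> gv m i)"
  by (rule part_le_gv) (simp add: good_def)

lemma good_eq: "good l \<Longrightarrow> good m \<Longrightarrow> (\<And>i. gv l i = gv m i) \<Longrightarrow> l = m"
  by (rule part_le_antisym) (simp_all add: le_iff)

lemma good_eq2: "good x \<Longrightarrow> good y \<Longrightarrow> \<forall>i. gv x i \<le> gv y i \<Longrightarrow> \<forall>i. gv y i \<le> gv x i \<Longrightarrow> x = y"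
  by (rule good_eq) (auto intro: order_antisym)

lemma po: "partial_order Sch_poset"
  apply unfold_locales
  apply (simp_all add: Sch_poset_def Sch_good le_iff)
  apply (rule good_eq2, assumption+)
  apply (meson order_trans)
  done

lemma join_eq: assumes "x \<in> Sch" "y \<in> Sch" shows "join Sch_poset x y = Jn x y"
proof -
  interpret partial_order Sch_poset by (rule po)
  have gx: "good x" "good y" using assms Sch_good by auto
  have l: "least Sch_poset (Jn x y) (Upper Sch_poset {x, y})"
    unfolding least_def Upper_def using gx good_Jn[OF gx]
    by (auto simp: Sch_poset_def Sch_good le_iff gv_Jn)
  show ?thesis unfolding join_def sup_def
    apply (rule some_equality)
     apply (rule l)
    apply (erule least_unique[OF _ l])
    done
qed

lemma meet_eq: assumes "x \<in> Sch" "y \<in> Sch" shows "meet Sch_poset x y = Mt x y"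
proof -
  interpret partial_order Sch_poset by (rule po)
  have gx: "good x" "good y" using assms Sch_good by auto
  have l: "greatest Sch_poset (Mt x y) (Lower Sch_poset {x, y})"
    unfolding greatest_def Lower_def using gx good_Mt[OF gx]
    by (auto simp: Sch_poset_def Sch_good le_iff gv_Mt)
  show ?thesis unfolding meet_def inf_def
    apply (rule some_equality)
     apply (rule l)
    apply (erule greatest_unique[OF _ l])
    done
qed

theorem mainTheorem5:
  shows "distributive_lattice Sch_poset"
proof -
  interpret partial_order Sch_poset by (rule po)
  have lat: "lattice Sch_poset"
  proof unfold_locales
    fix x y assume "x \<in> carrier Sch_poset" "y \<in> carrier Sch_poset"
    hence gx: "good x" "good y" by (auto simp: Sch_poset_def Sch_good)
    show "\<exists>s. least Sch_poset s (Upper Sch_poset {x, y})"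
      unfolding least_def Upper_def using gx good_Jn[OF gx]
      by (intro exI[of _ "Jn x y"]) (auto simp: Sch_poset_def Sch_good le_iff gv_Jn)
    show "\<exists>s. greatest Sch_poset s (Lower Sch_poset {x, y})"
      unfolding greatest_def Lower_def using gx good_Mt[OF gx]
      by (intro exI[of _ "Mt x y"]) (auto simp: Sch_poset_def Sch_good le_iff gv_Mt)
  qed
  show ?thesis unfolding distributive_lattice_def
  proof (intro conjI lat ballI)
    fix x y z assume "x \<in> carrier Sch_poset" "y \<in> carrier Sch_poset" "z \<in> carrier Sch_poset"
    hence s: "x \<in> Sch" "y \<in> Sch" "z \<in> Sch" by (auto simp: Sch_poset_def)
    hence g: "good x" "good y" "good z" by (auto simp: Sch_good)
    have s2: "Jn y z \<in> Sch" "Mt x y \<in> Sch" "Mt x z \<in> Sch"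
      using g by (auto simp: Sch_good good_Jn good_Mt)
    show "x \<sqinter>\<^bsub>Sch_poset\<^esub> (y \<squnion>\<^bsub>Sch_poset\<^esub> z) =
          (x \<sqinter>\<^bsub>Sch_poset\<^esub> y) \<squnion>\<^bsub>Sch_poset\<^esub> (x \<sqinter>\<^bsub>Sch_poset\<^esub> z)"
      using s s2 g
      apply (simp add: join_eq meet_eq)
      apply (rule good_eq)
        apply (auto simp: good_Jn good_Mt gv_Jn gv_Mt min_def max_def)
      done
  qed
qed

end
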